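(* Let $\mathbf{X}\in\{0,1\}^{m\times n}$ be superfirm and let $(\ell,k)\in\mathrm{supp}(\mathbf{X})$. Then $\mathcal{S}^{(\ell,k)}(\mathbf{X})$ is firm. Furthermore, if $(\ell,k)$ is a simplicial $1$ of $\mathbf{X}$, then $\mathcal{S}^{(\ell,k)}(\mathbf{X})$ is superfirm.
   Context: For a binary matrix $\mathbf{X}$, $\mathrm{supp}(\mathbf{X})=\{(i,j):x_{i,j}=1\}$. A submatrix indexed by $I\times J$ is obtained by deleting the rows not in $I$ and the columns not in $J$. A rectangle of $\mathbf{X}$ is a set $I\times J\subseteq\mathrm{supp}(\mathbf{X})$. An isolated set is a subset of $\mathrm{supp}(\mathbf{X})$ no two distinct elements of which lie in a common rectangle; $i(\mathbf{X})$ is the maximum size of an isolated set, and $br(\mathbf{X})$ (the Boolean rank) is the minimum number of rectangles whose union is $\mathrm{supp}(\mathbf{X})$. $\mathbf{X}$ is firm if $i(\mathbf{X}')=br(\mathbf{X}')$ for every submatrix $\mathbf{X}'$ of $\mathbf{X}$, including $\mathbf{X}$ itself. The rectangle cover graph $\mathcal{G}(\mathbf{X})$ has vertex set $\mathrm{supp}(\mathbf{X})$, two vertices being adjacent iff some rectangle of $\mathbf{X}$ contains both. $\mathbf{X}$ is superfirm if $\mathcal{G}(\mathbf{X})$ is a perfect graph. A position $(\ell,k)\in\mathrm{supp}(\mathbf{X})$ is a simplicial $1$ if, with $I=\{i:x_{i,k}=1\}$ and $J=\{j:x_{\ell,j}=1\}$, $I\times J\subseteq\mathrm{supp}(\mathbf{X})$.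 Stretching: for $\mathbf{X}\in\{0,1\}^{m\times n}$ and $(\ell,k)\in\mathrm{supp}(\mathbf{X})$, $\mathcal{S}^{(\ell,k)}(\mathbf{X})$ is the $(m+1)\times(n+1)$ binary matrix whose entries $(i,j)$ with $i\in[m],j\in[n]$ equal $x_{i,j}$, whose entries at $(\ell,n+1)$, $(m+1,k)$, $(m+1,n+1)$ equal $1$, and all of whose other entries equal $0$. *)

theory Defs
  imports Main
begin

text \<open>A binary m x n matrix is given by its dimensions m, n and an entry function
  X :: nat => nat => bool (entry (i,j) equals 1 iff X i j), with 0-based indices
  i < m, j < n; values of X outside this range are irrelevant.\<close>

type_synonym bmat = "nat \<Rightarrow> nat \<Rightarrow> bool"

definition supp :: "nat \<Rightarrow> nat \<Rightarrow> bmat \<Rightarrow> (nat \<times> nat) set" where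
  "supp m n X = {(i, j). i < m \<and> j < n \<and> X i j}"

definition is_rectangle :: "nat \<Rightarrow> nat \<Rightarrow> bmat \<Rightarrow> (nat \<times> nat) set \<Rightarrow> bool" where
  "is_rectangle m n X R \<longleftrightarrow> (\<exists>I J. R = I \<times> J \<and> I \<times> J \<subseteq> supp m n X)"

definition isolated_set :: "nat \<Rightarrow> nat \<Rightarrow> bmat \<Rightarrow> (nat \<times> nat) set \<Rightarrow> bool" where
  "isolated_set m n X S \<longleftrightarrow> S \<subseteq> supp m n X \<and>
     (\<forall>a\<in>S. \<forall>b\<in>S. a \<noteq> b \<longrightarrow> \<not> (\<exists>R. is_rectangle m n X R \<and> a \<in> R \<and> b \<in> R))"

definition isol_num :: "nat \<Rightarrow> nat \<Rightarrow> bmat \<Rightarrow> nat" where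
  "isol_num m n X = Max {card S | S. isolated_set m n X S}"

definition boolean_rank :: "nat \<Rightarrow> nat \<Rightarrow> bmat \<Rightarrow> nat" where
  "boolean_rank m n X = (LEAST k. \<exists>F. finite F \<and> card F = k \<and>
      (\<forall>R\<in>F. is_rectangle m n X R) \<and> \<Union>F = supp m n X)"

text \<open>Submatrix indexed by I x J: delete rows not in I and columns not in J;
  the remaining rows/columns are renumbered in increasing order.\<close>

definition submatrix :: "bmat \<Rightarrow> nat set \<Rightarrow> nat set \<Rightarrow> bmat" where
  "submatrix X I J = (\<lambda>a b. X (sorted_list_of_set I ! a) (sorted_list_of_set J ! b))"

definition firm :: "nat \<Rightarrow> nat \<Rightarrow> bmat \<Rightarrow> bool" where
  "firm m n X \<longleftrightarrow> (\<forall>I J. I \<subseteq> {..<m} \<longrightarrow> J \<subseteq> {..<n} \<longrightarrow>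
      isol_num (card I) (card J) (submatrix X I J) = boolean_rank (card I) (card J) (submatrix X I J))"

definition is_clique :: "('v \<Rightarrow> 'v \<Rightarrow> bool) \<Rightarrow> 'v set \<Rightarrow> bool" where
  "is_clique E K \<longleftrightarrow> (\<forall>u\<in>K. \<forall>v\<in>K. u \<noteq> v \<longrightarrow> E u v)"

definition clique_number :: "'v set \<Rightarrow> ('v \<Rightarrow> 'v \<Rightarrow> bool) \<Rightarrow> nat" where
  "clique_number W E = Max {card K | K. K \<subseteq> W \<and> is_clique E K}"

definition chromatic_number :: "'v set \<Rightarrow> ('v \<Rightarrow> 'v \<Rightarrow> bool) \<Rightarrow> nat" where
  "chromatic_number W E = (LEAST k. \<exists>c :: 'v \<Rightarrow> nat. (\<forall>v\<in>W. c v < k) \<and>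
      (\<forall>u\<in>W. \<forall>v\<in>W. u \<noteq> v \<longrightarrow> E u v \<longrightarrow> c u \<noteq> c v))"

definition perfect_graph :: "'v set \<Rightarrow> ('v \<Rightarrow> 'v \<Rightarrow> bool) \<Rightarrow> bool" where
  "perfect_graph V E \<longleftrightarrow> (\<forall>W\<subseteq>V. chromatic_number W E = clique_number W E)"

definition rc_adj :: "nat \<Rightarrow> nat \<Rightarrow> bmat \<Rightarrow> nat \<times> nat \<Rightarrow> nat \<times> nat \<Rightarrow> bool" where
  "rc_adj m n X a b \<longleftrightarrow> a \<noteq> b \<and> (\<exists>R. is_rectangle m n X R \<and> a \<in> R \<and> b \<in> R)"

definition superfirm :: "nat \<Rightarrow> nat \<Rightarrow> bmat \<Rightarrow> bool" where
  "superfirm m n X \<longleftrightarrow> perfect_graph (supp m n X) (rc_adj m n X)"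

definition simplicial_one :: "nat \<Rightarrow> nat \<Rightarrow> bmat \<Rightarrow> nat \<Rightarrow> nat \<Rightarrow> bool" where
  "simplicial_one m n X l k \<longleftrightarrow> (l, k) \<in> supp m n X \<and>
     {i. i < m \<and> X i k} \<times> {j. j < n \<and> X l j} \<subseteq> supp m n X"

text \<open>Stretching at (l,k): an (m+1) x (n+1) matrix; new row index m, new column index n.\<close>

definition stretch :: "nat \<Rightarrow> nat \<Rightarrow> bmat \<Rightarrow> nat \<Rightarrow> nat \<Rightarrow> bmat" where
  "stretch m n X l k = (\<lambda>i j. if i < m \<and> j < n then X i j
       else (i, j) = (l, n) \<or> (i, j) = (m, k) \<or> (i, j) = (m, n))"

end

theory Submission
  imports Defs
begin

definition colouring :: "'v set \<Rightarrow> ('v \<Rightarrow> 'v \<Rightarrow> bool) \<Rightarrow> ('v \<Rightarrow> nat) \<Rightarrow> nat \<Rightarrow> bool" where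
  "colouring W E c k \<longleftrightarrow> (\<forall>v\<in>W. c v < k) \<and> (\<forall>u\<in>W. \<forall>v\<in>W. u \<noteq> v \<longrightarrow> E u v \<longrightarrow> c u \<noteq> c v)"

lemma chrom_def2: "chromatic_number W E = (LEAST k. \<exists>c. colouring W E c k)"
  unfolding chromatic_number_def colouring_def by simp

lemma chrom_le: "colouring W E c k \<Longrightarrow> chromatic_number W E \<le> k"
  unfolding chrom_def2 by (rule Least_le) blast

lemma chrom_ex:
  assumes "finite W"
  shows "\<exists>c. colouring W E c (chromatic_number W E)"
proof -
  obtain f n where f: "f ` W = {i::nat. i < n}" "inj_on f W"
    using finite_imp_inj_to_nat_seg[OF assms] by blast
  have "colouring W E f n" unfolding colouring_def using f by (auto dest: inj_onD)
  hence "\<exists>k c. colouring W E c k" by blast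
  thus ?thesis unfolding chrom_def2 by (rule LeastI_ex)
qed

lemma clique_set_finite: "finite W \<Longrightarrow> finite {card K | K. K \<subseteq> W \<and> is_clique E K}"
  by (rule finite_subset[of _ "card ` Pow W"]) auto

lemma clique_number_ge:
  assumes "finite W" "K \<subseteq> W" "is_clique E K"
  shows "card K \<le> clique_number W E"
  unfolding clique_number_def using clique_set_finite[OF assms(1)] assms by (intro Max_ge) auto

lemma clique_number_ex:
  assumes "finite W"
  shows "\<exists>K. K \<subseteq> W \<and> is_clique E K \<and> card K = clique_number W E"
proof -
  have "{} \<subseteq> W \<and> is_clique E {}" by (simp add: is_clique_def)
  hence ne: "{card K | K. K \<subseteq> W \<and> is_clique E K} \<noteq> {}" by blast
  have "clique_number W E \<in> {card K | K. K \<subseteq> W \<and> is_clique E K}"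
    unfolding clique_number_def using clique_set_finite[OF assms] ne by (rule Max_in)
  thus ?thesis by auto
qed

lemma clique_mono:
  assumes "finite W'" "W \<subseteq> W'"
  shows "clique_number W E \<le> clique_number W' E"
proof -
  obtain K where "K \<subseteq> W" "is_clique E K" "card K = clique_number W E"
    using clique_number_ex[OF finite_subset[OF assms(2,1)]] by blast
  thus ?thesis using clique_number_ge[OF assms(1), of K E] assms(2) by auto
qed

lemma omega_le_chi:
  assumes "finite W"
  shows "clique_number W E \<le> chromatic_number W E"
proof -
  obtain K where K: "K \<subseteq> W" "is_clique E K" "card K = clique_number W E"
    using clique_number_ex[OF assms] by blast
  obtain c where c: "colouring W E c (chromatic_number W E)" using chrom_ex[OF assms] by blast
  have "inj_on c K" using K c unfolding inj_on_def colouring_def is_clique_def by blast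
  hence "card K = card (c ` K)" by (simp add: card_image)
  also have "\<dots> \<le> card {..<chromatic_number W E}"
    using c K by (intro card_mono) (auto simp: colouring_def)
  finally show ?thesis using K by simp
qed

lemma iso_inv:
  assumes inj: "inj_on f S"
    and adj: "\<And>u v. u\<in>S \<Longrightarrow> v\<in>S \<Longrightarrow> u\<noteq>v \<Longrightarrow> E' u v = E (f u) (f v)"
  shows "clique_number S E' = clique_number (f`S) E"
    "chromatic_number S E' = chromatic_number (f`S) E"
proof -
  have "{card K | K. K \<subseteq> S \<and> is_clique E' K} = {card K | K. K \<subseteq> f`S \<and> is_clique E K}"
  proof (intro equalityI subsetI)
    fix x assume "x \<in> {card K | K. K \<subseteq> S \<and> is_clique E' K}"
    then obtain K where K: "x = card K" "K \<subseteq> S" "is_clique E' K" by blast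
    have "card (f ` K) = card K" using inj K by (meson card_image inj_on_subset)
    moreover have "is_clique E (f ` K)" unfolding is_clique_def
    proof (intro ballI impI)
      fix x y assume xy: "x \<in> f ` K" "y \<in> f ` K" "x \<noteq> y"
      then obtain u v where uv: "u \<in> K" "v \<in> K" "x = f u" "y = f v" by blast
      hence "u \<noteq> v" using xy by auto
      hence "E' u v" using K(3) uv unfolding is_clique_def by auto
      thus "E x y" using adj uv K(2) \<open>u \<noteq> v\<close> by auto
    qed
    moreover have "f ` K \<subseteq> f ` S" using K by auto
    ultimately show "x \<in> {card K | K. K \<subseteq> f`S \<and> is_clique E K}" using K(1) by (intro CollectI exI[of _ "f ` K"]) simp
  next
    fix x assume "x \<in> {card K | K. K \<subseteq> f`S \<and> is_clique E K}"
    then obtain K where K: "x = card K" "K \<subseteq> f`S" "is_clique E K" by blast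
    define K' where "K' = {y\<in>S. f y \<in> K}"
    have fk: "f ` K' = K" using K unfolding K'_def by auto
    have "card K' = card K" using inj fk unfolding K'_def
      by (metis (no_types, lifting) card_image inj_on_subset mem_Collect_eq subsetI)
    moreover have "is_clique E' K'" unfolding is_clique_def
    proof (intro ballI impI)
      fix u v assume uv: "u \<in> K'" "v \<in> K'" "u \<noteq> v"
      hence "f u \<noteq> f v" using inj unfolding K'_def by (auto dest: inj_onD)
      hence "E (f u) (f v)" using K(3) uv unfolding is_clique_def K'_def by auto
      thus "E' u v" using adj uv unfolding K'_def by auto
    qed
    moreover have "K' \<subseteq> S" unfolding K'_def by auto
    ultimately show "x \<in> {card K | K. K \<subseteq> S \<and> is_clique E' K}" using K(1) by (intro CollectI exI[of _ K']) simp
  qed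
  thus "clique_number S E' = clique_number (f`S) E" unfolding clique_number_def by simp
  have "\<And>k. (\<exists>c. colouring S E' c k) = (\<exists>c. colouring (f`S) E c k)"
  proof
    fix k assume "\<exists>c. colouring S E' c k"
    then obtain c where c: "colouring S E' c k" by blast
    have "colouring (f`S) E (\<lambda>w. c (the_inv_into S f w)) k"
      using c adj inj unfolding colouring_def by (auto simp: the_inv_into_f_f)
    thus "\<exists>c. colouring (f`S) E c k" by blast
  next
    fix k assume "\<exists>c. colouring (f`S) E c k"
    then obtain c where c: "colouring (f`S) E c k" by blast
    have "colouring S E' (\<lambda>w. c (f w)) k" unfolding colouring_def
    proof (intro conjI ballI impI)
      fix v assume "v \<in> S" thus "c (f v) < k" using c unfolding colouring_def by auto
    next
      fix u v assume uv: "u \<in> S" "v \<in> S" "u \<noteq> v" "E' u v"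
      hence "f u \<noteq> f v" using inj by (auto dest: inj_onD)
      thus "c (f u) \<noteq> c (f v)" using c uv adj unfolding colouring_def by auto
    qed
    thus "\<exists>c. colouring S E' c k" by blast
  qed
  thus "chromatic_number S E' = chromatic_number (f`S) E" unfolding chrom_def2 by simp
qed

lemma cong_inv:
  assumes "\<And>u v. u\<in>S \<Longrightarrow> v\<in>S \<Longrightarrow> u\<noteq>v \<Longrightarrow> E' u v = E u v"
  shows "clique_number S E' = clique_number S E" "chromatic_number S E' = chromatic_number S E"
  using iso_inv[of id S E' E] assms by auto

lemma twin_lemma:
  assumes fin: "finite S" and sym: "\<And>u v. E u v = E v u"
    and x: "x \<in> S" "x' \<in> S" "x \<noteq> x'" "E x x'"
    and tw: "\<And>y. y \<in> S \<Longrightarrow> y \<noteq> x \<Longrightarrow> y \<noteq> x' \<Longrightarrow> E x' y = E x y"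
    and IH: "\<And>T. T \<subseteq> S - {x'} \<Longrightarrow> chromatic_number T E = clique_number T E"
  shows "chromatic_number S E = clique_number S E"
proof -
  define G0 where "G0 = S - {x'}"
  define w0 where "w0 = clique_number G0 E"
  have finG0: "finite G0" using fin unfolding G0_def by auto
  have xG0: "x \<in> G0" using x unfolding G0_def by auto
  have "chromatic_number G0 E = w0" using IH unfolding w0_def G0_def by auto
  then obtain c0 where c0: "colouring G0 E c0 w0" using chrom_ex[OF finG0, of E] by auto
  have w0le: "w0 \<le> clique_number S E" unfolding w0_def G0_def using fin by (intro clique_mono) auto
  have "chromatic_number S E \<le> clique_number S E"
  proof (cases "w0 < clique_number S E")
    case True
    have "colouring S E (c0(x' := w0)) (Suc w0)"
      using c0 unfolding colouring_def G0_def by (auto simp: less_Suc_eq)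
    hence "chromatic_number S E \<le> Suc w0" by (rule chrom_le)
    thus ?thesis using True by simp
  next
    case False
    hence wS: "clique_number S E = w0" using w0le by simp
    define A where "A = {v\<in>G0. c0 v = c0 x}"
    define G1 where "G1 = G0 - (A - {x})"
    have finG1: "finite G1" using finG0 unfolding G1_def by auto
    have lt: "clique_number G1 E < w0"
    proof (rule ccontr)
      assume "\<not> clique_number G1 E < w0"
      obtain K where K: "K \<subseteq> G1" "is_clique E K" "card K = clique_number G1 E"
        using clique_number_ex[OF finG1] by blast
      have KG0: "K \<subseteq> G0" using K unfolding G1_def by auto
      have injK: "inj_on c0 K" using K KG0 c0 unfolding inj_on_def colouring_def is_clique_def by blast
      have sub: "c0 ` K \<subseteq> {..<w0}" using c0 KG0 unfolding colouring_def by auto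
      have "card (c0 ` K) \<ge> w0" using injK K \<open>\<not> clique_number G1 E < w0\<close> by (simp add: card_image)
      hence "c0 ` K = {..<w0}" using sub by (intro card_seteq) auto
      moreover have "c0 x < w0" using c0 xG0 unfolding colouring_def by auto
      ultimately have "c0 x \<in> c0 ` K" by simp
      then obtain v where v0: "c0 x = c0 v" "v \<in> K" by (rule imageE)
      hence v: "v \<in> K" "c0 v = c0 x" by auto
      hence "v \<in> A" using KG0 unfolding A_def by auto
      hence "v = x" using K v unfolding G1_def by auto
      hence xK: "x \<in> K" using v by simp
      have x'K: "x' \<notin> K" using KG0 unfolding G0_def by auto
      have "is_clique E (insert x' K)" unfolding is_clique_def
      proof (intro ballI impI)
        have a: "E x' u" if "u \<in> K" for u
        proof (cases "u = x")
          case True thus ?thesis using x sym by metis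
        next
          case False
          hence "E x u" using K(2) xK that unfolding is_clique_def by auto
          moreover have "u \<in> S" "u \<noteq> x'" using that KG0 unfolding G0_def by auto
          ultimately show ?thesis using tw False by auto
        qed
        fix u v assume "u \<in> insert x' K" "v \<in> insert x' K" "u \<noteq> v"
        thus "E u v" using a K(2) sym unfolding is_clique_def by auto
      qed
      moreover have "insert x' K \<subseteq> S" using KG0 x unfolding G0_def by auto
      ultimately have "card (insert x' K) \<le> clique_number S E" using fin by (intro clique_number_ge)
      hence "Suc (card K) \<le> w0" using x'K KG0 finG0 wS by (simp add: finite_subset)
      thus False using K \<open>\<not> clique_number G1 E < w0\<close> by simp
    qed
    have "chromatic_number G1 E = clique_number G1 E" using IH unfolding G1_def G0_def by auto
    then obtain c1 where c1: "colouring G1 E c1 (clique_number G1 E)"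
      using chrom_ex[OF finG1, of E] by auto
    define c2 where "c2 = (\<lambda>v. if v \<in> G1 then c1 v else w0 - 1)"
    have "colouring S E c2 w0" unfolding colouring_def
    proof (intro conjI ballI impI)
      fix v assume "v \<in> S" thus "c2 v < w0" using c1 lt unfolding c2_def colouring_def by auto
    next
      fix u v assume uv: "u \<in> S" "v \<in> S" "u \<noteq> v" "E u v"
      show "c2 u \<noteq> c2 v"
      proof (cases "u \<in> G1")
        case uG: True
        show ?thesis
        proof (cases "v \<in> G1")
          case True thus ?thesis using uG uv c1 unfolding c2_def colouring_def by auto
        next
          case False thus ?thesis using uG c1 lt unfolding c2_def colouring_def by auto
        qed
      next
        case uG: False
        show ?thesis
        proof (cases "v \<in> G1")
          case True thus ?thesis using uG c1 lt unfolding c2_def colouring_def by auto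
        next
          case vG: False
          have AA: "\<not> E p q" if "p \<in> A" "q \<in> A" "p \<noteq> q" for p q
          proof
            assume "E p q"
            moreover have "p \<in> G0" "q \<in> G0" using that unfolding A_def by auto
            ultimately have "c0 p \<noteq> c0 q" using c0 that(3) unfolding colouring_def by blast
            thus False using that unfolding A_def by auto
          qed
          have uA: "u = x' \<or> (u \<in> A \<and> u \<noteq> x)" using uG uv xG0 unfolding G1_def G0_def by auto
          have vA: "v = x' \<or> (v \<in> A \<and> v \<noteq> x)" using vG uv xG0 unfolding G1_def G0_def by auto
          have xA: "x \<in> A" using xG0 unfolding A_def by auto
          have tw2: "\<not> E x' p" if "p \<in> A" "p \<noteq> x" for p
          proof -
            have "p \<in> S" "p \<noteq> x'" using that unfolding A_def G0_def by auto
            hence "E x' p = E x p" using tw that by auto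
            thus ?thesis using AA[OF xA that(1)] that by auto
          qed
          have False using uA vA
          proof (elim disjE)
            assume "u = x'" "v = x'" thus False using uv by simp
          next
            assume "u = x'" "v \<in> A \<and> v \<noteq> x" thus False using uv tw2 by auto
          next
            assume "u \<in> A \<and> u \<noteq> x" "v = x'" thus False using uv tw2 sym[of u v] by auto
          next
            assume "u \<in> A \<and> u \<noteq> x" "v \<in> A \<and> v \<noteq> x" thus False using uv AA by auto
          qed
          thus ?thesis ..
        qed
      qed
    qed
    hence "chromatic_number S E \<le> w0" by (rule chrom_le)
    thus ?thesis using wS by simp
  qed
  thus ?thesis using omega_le_chi[OF fin, of E] by simp
qed

definition E_rep :: "('v \<Rightarrow> 'v \<Rightarrow> bool) \<Rightarrow> 'v \<times> nat \<Rightarrow> 'v \<times> nat \<Rightarrow> bool" where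
  "E_rep E p q \<longleftrightarrow> fst p = fst q \<or> E (fst p) (fst q)"

lemma perfect_sub: "perfect_graph V E \<Longrightarrow> W \<subseteq> V \<Longrightarrow> chromatic_number W E = clique_number W E"
  unfolding perfect_graph_def by auto

lemma rep_perfect:
  assumes perf: "perfect_graph V E" and sym: "\<And>u v. E u v = E v u"
  shows "finite S \<Longrightarrow> fst ` S \<subseteq> V \<Longrightarrow> chromatic_number S (E_rep E) = clique_number S (E_rep E)"
proof (induction "card S" arbitrary: S rule: less_induct)
  case less
  show ?case
  proof (cases "inj_on fst S")
    case True
    have adj: "E_rep E u v = E (fst u) (fst v)" if "u \<in> S" "v \<in> S" "u \<noteq> v" for u v
      using True that unfolding E_rep_def by (auto dest: inj_onD)
    show ?thesis using iso_inv[of fst S "E_rep E" E, OF True adj] perfect_sub[OF perf less.prems(2)] by simp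
  next
    case False
    then obtain x x' where xx: "x \<in> S" "x' \<in> S" "x \<noteq> x'" "fst x = fst x'"
      unfolding inj_on_def by blast
    show ?thesis
    proof (rule twin_lemma[OF less.prems(1) _ xx(1,2,3)])
      show "E_rep E u v = E_rep E v u" for u v unfolding E_rep_def using sym by auto
      show "E_rep E x x'" unfolding E_rep_def using xx by auto
      show "E_rep E x' y = E_rep E x y" for y unfolding E_rep_def using xx by auto
      fix T assume T: "T \<subseteq> S - {x'}"
      hence "T \<subset> S" using xx by blast
      hence "card T < card S" using less.prems(1) by (rule psubset_card_mono[rotated])
      moreover have "finite T" "fst ` T \<subseteq> V" using T less.prems by (auto intro: finite_subset)
      ultimately show "chromatic_number T (E_rep E) = clique_number T (E_rep E)" using less.hyps by blast
    qed
  qed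
qed

lemma lovasz:
  assumes fin: "finite V" and perf: "perfect_graph V E" and sym: "\<And>u v. E u v = E v u"
    and Fdef: "\<And>u v. F u v = (\<not> E u v)"
  shows "W \<subseteq> V \<Longrightarrow> chromatic_number W F = clique_number W F"
proof (induction "card W" arbitrary: W rule: less_induct)
  case less
  have finW: "finite W" using less.prems fin by (rule finite_subset)
  define \<alpha> where "\<alpha> = clique_number W F"
  have "chromatic_number W F \<le> \<alpha>"
  proof (cases "W = {}")
    case True
    have "colouring W F (\<lambda>_. 0) 0" using True unfolding colouring_def by auto
    thus ?thesis by (metis chrom_le le0 le_zero_eq)
  next
    case Wne: False
    then obtain w where w: "w \<in> W" by blast
    have "card {w} \<le> \<alpha>" unfolding \<alpha>_def using finW w by (intro clique_number_ge) (auto simp: is_clique_def)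
    hence \<alpha>1: "\<alpha> \<ge> 1" by simp
    show ?thesis
    proof (cases "\<exists>K. K \<subseteq> W \<and> is_clique E K \<and> (\<forall>A. A \<subseteq> W \<and> is_clique F A \<and> card A = \<alpha> \<longrightarrow> A \<inter> K \<noteq> {})")
      case True
      then obtain K where K: "K \<subseteq> W" "is_clique E K"
        "\<And>A. A \<subseteq> W \<Longrightarrow> is_clique F A \<Longrightarrow> card A = \<alpha> \<Longrightarrow> A \<inter> K \<noteq> {}" by blast
      obtain A0 where A0: "A0 \<subseteq> W" "is_clique F A0" "card A0 = \<alpha>"
        using clique_number_ex[OF finW] unfolding \<alpha>_def by blast
      have Kne: "K \<noteq> {}" using K(3)[OF A0] by auto
      define W' where "W' = W - K"
      have "W' \<subset> W" using Kne K(1) unfolding W'_def by blast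
      hence cW': "card W' < card W" using finW by (rule psubset_card_mono[rotated])
      have W'V: "W' \<subseteq> V" using less.prems unfolding W'_def by auto
      have finW': "finite W'" using finW unfolding W'_def by auto
      have IH: "chromatic_number W' F = clique_number W' F" using less.hyps[OF cW' W'V] .
      have lt: "clique_number W' F < \<alpha>"
      proof -
        obtain A' where A': "A' \<subseteq> W'" "is_clique F A'" "card A' = clique_number W' F"
          using clique_number_ex[OF finW'] by blast
        have A'W: "A' \<subseteq> W" using A' unfolding W'_def by auto
        have "card A' \<le> \<alpha>" unfolding \<alpha>_def using finW A'W A'(2) by (rule clique_number_ge)
        moreover have "card A' \<noteq> \<alpha>"
        proof
          assume "card A' = \<alpha>"
          hence "A' \<inter> K \<noteq> {}" using K(3)[OF A'W A'(2)] by simp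
          thus False using A'(1) unfolding W'_def by auto
        qed
        ultimately show ?thesis using A'(3) by simp
      qed
      obtain c' where c': "colouring W' F c' (clique_number W' F)"
        using chrom_ex[OF finW', of F] IH by auto
      define c where "c = (\<lambda>v. if v \<in> K then clique_number W' F else c' v)"
      have "colouring W F c (Suc (clique_number W' F))" unfolding colouring_def
      proof (intro conjI ballI impI)
        fix v assume "v \<in> W" thus "c v < Suc (clique_number W' F)"
          using c' unfolding c_def colouring_def W'_def by (auto simp: less_Suc_eq)
      next
        fix u v assume uv: "u \<in> W" "v \<in> W" "u \<noteq> v" "F u v"
        show "c u \<noteq> c v"
        proof (cases "u \<in> K \<and> v \<in> K")
          case True
          hence "E u v" using K(2) uv unfolding is_clique_def by auto
          thus ?thesis using uv Fdef by auto
        next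
          case False
          thus ?thesis using c' uv unfolding c_def colouring_def W'_def
            by (metis DiffI less_irrefl)
        qed
      qed
      hence "chromatic_number W F \<le> Suc (clique_number W' F)" by (rule chrom_le)
      thus ?thesis using lt by simp
    next
      case False
      hence "\<forall>K. \<exists>A. K \<subseteq> W \<and> is_clique E K \<longrightarrow> A \<subseteq> W \<and> is_clique F A \<and> card A = \<alpha> \<and> A \<inter> K = {}"
        by blast
      from choice[OF this] obtain Af where Af0: "\<forall>K. K \<subseteq> W \<and> is_clique E K \<longrightarrow>
          Af K \<subseteq> W \<and> is_clique F (Af K) \<and> card (Af K) = \<alpha> \<and> Af K \<inter> K = {}"
        by blast
      have Af: "\<And>K. K \<subseteq> W \<Longrightarrow> is_clique E K \<Longrightarrow>
          Af K \<subseteq> W \<and> is_clique F (Af K) \<and> card (Af K) = \<alpha> \<and> Af K \<inter> K = {}"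
        using Af0 by blast
      define KK where "KK = {K. K \<subseteq> W \<and> is_clique E K}"
      have finKK: "finite KK"
      proof (rule finite_subset)
        show "KK \<subseteq> Pow W" unfolding KK_def by auto
        show "finite (Pow W)" using finW by simp
      qed
      define q where "q = card KK"
      have "{} \<in> KK" unfolding KK_def is_clique_def by auto
      hence "q > 0" unfolding q_def using finKK by (auto simp: card_gt_0_iff)
      hence q1: "q \<ge> 1" by simp
      define h where "h = (\<lambda>v. (\<Sum>K\<in>KK. of_bool (v \<in> Af K)) :: nat)"
      have hsum: "(\<Sum>v\<in>K'. h v) = (\<Sum>K\<in>KK. card (K' \<inter> Af K))" if "K' \<subseteq> W" for K'
      proof -
        have finK': "finite K'" using finW that by (rule finite_subset[rotated])
        have "(\<Sum>v\<in>K'. h v) = (\<Sum>K\<in>KK. \<Sum>v\<in>K'. of_bool (v \<in> Af K))"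
          unfolding h_def by (rule sum.swap)
        also have "\<dots> = (\<Sum>K\<in>KK. card (K' \<inter> Af K))"
          using finK' by (intro sum.cong refl) simp
        finally show ?thesis .
      qed
      define S where "S = Sigma W (\<lambda>v. {..<h v})"
      have finS: "finite S" unfolding S_def using finW by auto
      have "card S = (\<Sum>v\<in>W. h v)" unfolding S_def using finW by simp
      also have "\<dots> = (\<Sum>K\<in>KK. card (W \<inter> Af K))" by (rule hsum) simp
      also have "\<dots> = (\<Sum>K\<in>KK. \<alpha>)"
      proof (intro sum.cong refl)
        fix K assume "K \<in> KK"
        hence "Af K \<subseteq> W" "card (Af K) = \<alpha>" using Af unfolding KK_def by auto
        thus "card (W \<inter> Af K) = \<alpha>" by (simp add: Int_absorb1)
      qed
      finally have cardS: "card S = q * \<alpha>" unfolding q_def by simp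
      have fstS: "fst ` S \<subseteq> V" using less.prems unfolding S_def by auto
      have perfS: "chromatic_number S (E_rep E) = clique_number S (E_rep E)"
        using rep_perfect[OF perf sym finS fstS] .
      have omS: "clique_number S (E_rep E) \<le> q - 1"
      proof -
        obtain C where C: "C \<subseteq> S" "is_clique (E_rep E) C" "card C = clique_number S (E_rep E)"
          using clique_number_ex[OF finS] by blast
        define K' where "K' = fst ` C"
        have K'W: "K' \<subseteq> W" using C unfolding K'_def S_def by auto
        have K'cl: "is_clique E K'" unfolding is_clique_def
        proof (intro ballI impI)
          fix v w assume vw: "v \<in> K'" "w \<in> K'" "v \<noteq> w"
          then obtain p p' where "p \<in> C" "p' \<in> C" "fst p = v" "fst p' = w" unfolding K'_def by blast
          moreover hence "p \<noteq> p'" using vw by auto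
          ultimately show "E v w" using C(2) vw unfolding is_clique_def E_rep_def by auto
        qed
        have K'KK: "K' \<in> KK" using K'W K'cl unfolding KK_def by auto
        have finK': "finite K'" using finW K'W by (rule finite_subset[rotated])
        have "C \<subseteq> Sigma K' (\<lambda>v. {..<h v})" using C unfolding K'_def S_def by force
        hence "card C \<le> card (Sigma K' (\<lambda>v. {..<h v}))" using finK' by (intro card_mono) auto
        also have "\<dots> = (\<Sum>v\<in>K'. h v)" using finK' by simp
        also have "\<dots> = (\<Sum>K\<in>KK. card (K' \<inter> Af K))" using K'W by (rule hsum)
        also have "\<dots> = card (K' \<inter> Af K') + (\<Sum>K\<in>KK - {K'}. card (K' \<inter> Af K))"
          using finKK K'KK by (rule sum.remove)
        also have "\<dots> \<le> 0 + (\<Sum>K\<in>KK - {K'}. 1)"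
        proof (intro add_mono sum_mono)
          show "card (K' \<inter> Af K') \<le> 0" using Af[OF K'W K'cl] by (simp add: Int_commute)
        next
          fix K assume "K \<in> KK - {K'}"
          hence "is_clique F (Af K)" using Af unfolding KK_def by auto
          have "\<forall>a1\<in>K' \<inter> Af K. \<forall>a2\<in>K' \<inter> Af K. a1 = a2"
          proof (intro ballI, rule ccontr)
            fix a1 a2 assume a: "a1 \<in> K' \<inter> Af K" "a2 \<in> K' \<inter> Af K" "a1 \<noteq> a2"
            hence "E a1 a2" using K'cl unfolding is_clique_def by auto
            moreover have "F a1 a2" using a \<open>is_clique F (Af K)\<close> unfolding is_clique_def by auto
            ultimately show False using Fdef by auto
          qed
          thus "card (K' \<inter> Af K) \<le> 1" using finK' by (simp add: card_le_Suc0_iff_eq)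
        qed
        also have "\<dots> = q - 1" unfolding q_def using finKK K'KK by simp
        finally show ?thesis using C by simp
      qed
      obtain cS where cS: "colouring S (E_rep E) cS (chromatic_number S (E_rep E))"
        using chrom_ex[OF finS] by blast
      define k where "k = chromatic_number S (E_rep E)"
      have kle: "k \<le> q - 1" using omS perfS unfolding k_def by simp
      define B where "B = (\<lambda>i. {p\<in>S. cS p = i})"
      have cB: "card (B i) \<le> \<alpha>" for i
      proof -
        have inj: "inj_on fst (B i)" unfolding inj_on_def
        proof (intro ballI impI)
          fix p p' assume pp: "p \<in> B i" "p' \<in> B i" "fst p = fst p'"
          show "p = p'"
          proof (rule ccontr)
            assume "p \<noteq> p'"
            moreover have "E_rep E p p'" using pp unfolding E_rep_def by auto
            moreover have "p \<in> S" "p' \<in> S" using pp unfolding B_def by auto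
            ultimately have "cS p \<noteq> cS p'" using cS unfolding colouring_def by blast
            thus False using pp unfolding B_def by auto
          qed
        qed
        have sub: "fst ` B i \<subseteq> W" unfolding B_def S_def by auto
        have cl: "is_clique F (fst ` B i)" unfolding is_clique_def
        proof (intro ballI impI)
          fix v w assume vw: "v \<in> fst ` B i" "w \<in> fst ` B i" "v \<noteq> w"
          then obtain p p' where pp: "p \<in> B i" "p' \<in> B i" "fst p = v" "fst p' = w" by blast
          hence "p \<noteq> p'" using vw by auto
          moreover have "p \<in> S" "p' \<in> S" "cS p = cS p'" using pp unfolding B_def by auto
          ultimately have "\<not> E_rep E p p'" using cS unfolding colouring_def by blast
          thus "F v w" using pp Fdef unfolding E_rep_def by auto
        qed
        have "card (B i) = card (fst ` B i)" using inj by (simp add: card_image)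
        also have "\<dots> \<le> \<alpha>" unfolding \<alpha>_def using finW sub cl by (rule clique_number_ge)
        finally show ?thesis .
      qed
      have "S = (\<Union>i<k. B i)" using cS unfolding B_def k_def colouring_def by auto
      hence "card S \<le> (\<Sum>i<k. card (B i))" using card_UN_le[of "{..<k}" B] by simp
      also have "\<dots> \<le> (\<Sum>i<k. \<alpha>)" using cB by (intro sum_mono) auto
      also have "\<dots> = k * \<alpha>" by simp
      also have "\<dots> \<le> (q - 1) * \<alpha>" using kle by simp
      finally have "q * \<alpha> \<le> (q - 1) * \<alpha>" using cardS by simp
      hence "q \<le> q - 1" using \<alpha>1 by (simp add: mult_le_cancel2)
      hence False using q1 by simp
      thus ?thesis ..
    qed
  qed
  thus ?case using omega_le_chi[OF finW, of F] unfolding \<alpha>_def by simp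
qed

lemma supp_finite: "finite (supp m n X)"
  by (rule finite_subset[of _ "{..<m} \<times> {..<n}"]) (auto simp: supp_def)

lemma rc_adj_char:
  assumes "p \<in> supp m n X" "q \<in> supp m n X"
  shows "rc_adj m n X p q \<longleftrightarrow> p \<noteq> q \<and> X (fst p) (snd q) \<and> X (fst q) (snd p)"
proof -
  obtain i j i' j' where pq: "p = (i, j)" "q = (i', j')" by (cases p, cases q) auto
  have b: "i < m" "j < n" "X i j" "i' < m" "j' < n" "X i' j'" using assms pq by (auto simp: supp_def)
  show ?thesis
  proof
    assume "rc_adj m n X p q"
    then obtain I J where "p \<noteq> q" "I \<times> J \<subseteq> supp m n X" "p \<in> I \<times> J" "q \<in> I \<times> J"
      unfolding rc_adj_def is_rectangle_def by blast
    hence "(i, j') \<in> supp m n X" "(i', j) \<in> supp m n X" "p \<noteq> q" using pq by auto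
    thus "p \<noteq> q \<and> X (fst p) (snd q) \<and> X (fst q) (snd p)" using pq by (auto simp: supp_def)
  next
    assume a: "p \<noteq> q \<and> X (fst p) (snd q) \<and> X (fst q) (snd p)"
    have "{i, i'} \<times> {j, j'} \<subseteq> supp m n X" using a b pq by (auto simp: supp_def)
    hence "is_rectangle m n X ({i, i'} \<times> {j, j'})" unfolding is_rectangle_def by blast
    thus "rc_adj m n X p q" unfolding rc_adj_def using a pq by blast
  qed
qed

lemma rc_sym: "rc_adj m n X p q = rc_adj m n X q p"
  unfolding rc_adj_def by blast

lemma isol_eq: "isol_num m n X = clique_number (supp m n X) (\<lambda>u v. \<not> rc_adj m n X u v)"
proof -
  have "isolated_set m n X S \<longleftrightarrow> S \<subseteq> supp m n X \<and> is_clique (\<lambda>u v. \<not> rc_adj m n X u v) S" for S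
    unfolding isolated_set_def is_clique_def rc_adj_def by blast
  thus ?thesis unfolding isol_num_def clique_number_def by simp
qed

lemma clique_rect:
  assumes "K \<subseteq> supp m n X" "\<And>u v. u \<in> K \<Longrightarrow> v \<in> K \<Longrightarrow> u \<noteq> v \<Longrightarrow> rc_adj m n X u v"
  shows "fst ` K \<times> snd ` K \<subseteq> supp m n X"
proof
  fix x assume "x \<in> fst ` K \<times> snd ` K"
  then obtain p q where pq: "p \<in> K" "q \<in> K" "x = (fst p, snd q)" by auto
  show "x \<in> supp m n X"
  proof (cases "p = q")
    case True thus ?thesis using pq assms(1) by auto
  next
    case False
    hence "X (fst p) (snd q)" using assms pq rc_adj_char[of p m n X q] by auto
    thus ?thesis using pq assms(1) by (auto simp: supp_def)
  qed
qed

lemma br_eq: "boolean_rank m n X = chromatic_number (supp m n X) (\<lambda>u v. \<not> rc_adj m n X u v)"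
proof (rule antisym)
  let ?F = "\<lambda>u v. \<not> rc_adj m n X u v"
  let ?P = "\<lambda>k. \<exists>F. finite F \<and> card F = k \<and> (\<forall>R\<in>F. is_rectangle m n X R) \<and> \<Union>F = supp m n X"
  obtain c where c: "colouring (supp m n X) ?F c (chromatic_number (supp m n X) ?F)"
    using chrom_ex[OF supp_finite] by blast
  define k where "k = chromatic_number (supp m n X) ?F"
  define C where "C = (\<lambda>i. {v \<in> supp m n X. c v = i})"
  define F where "F = (\<lambda>i. fst ` C i \<times> snd ` C i) ` {..<k}"
  have Csub: "fst ` C i \<times> snd ` C i \<subseteq> supp m n X" for i
  proof (rule clique_rect)
    show "C i \<subseteq> supp m n X" unfolding C_def by auto
    fix u v assume uv: "u \<in> C i" "v \<in> C i" "u \<noteq> v"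
    hence "u \<in> supp m n X" "v \<in> supp m n X" "c u = c v" unfolding C_def by auto
    thus "rc_adj m n X u v" using c uv(3) unfolding colouring_def by blast
  qed
  have "?P (card F)"
  proof (intro exI conjI)
    show "finite F" unfolding F_def by auto
    show "\<forall>R\<in>F. is_rectangle m n X R"
    proof
      fix R assume "R \<in> F"
      then obtain i where "R = fst ` C i \<times> snd ` C i" unfolding F_def by blast
      thus "is_rectangle m n X R" unfolding is_rectangle_def using Csub by blast
    qed
    show "\<Union>F = supp m n X"
    proof
      show "\<Union>F \<subseteq> supp m n X"
      proof
        fix x assume "x \<in> \<Union>F"
        then obtain i where "x \<in> fst ` C i \<times> snd ` C i" unfolding F_def by blast
        thus "x \<in> supp m n X" using Csub by blast
      qed
      show "supp m n X \<subseteq> \<Union>F"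
      proof
        fix v assume v: "v \<in> supp m n X"
        hence "c v < k" using c unfolding colouring_def k_def by auto
        moreover have "v \<in> fst ` C (c v) \<times> snd ` C (c v)"
        proof -
          have vC: "v \<in> C (c v)" using v unfolding C_def by simp
          show ?thesis using imageI[OF vC, of fst] imageI[OF vC, of snd] by (simp add: mem_Times_iff)
        qed
        ultimately show "v \<in> \<Union>F" unfolding F_def by blast
      qed
    qed
  qed (rule refl)
  hence "boolean_rank m n X \<le> card F" unfolding boolean_rank_def by (rule Least_le)
  also have "card F \<le> k" unfolding F_def by (rule order.trans[OF card_image_le]) auto
  finally show "boolean_rank m n X \<le> chromatic_number (supp m n X) ?F" unfolding k_def .
next
  let ?F = "\<lambda>u v. \<not> rc_adj m n X u v"
  let ?P = "\<lambda>k. \<exists>F. finite F \<and> card F = k \<and> (\<forall>R\<in>F. is_rectangle m n X R) \<and> \<Union>F = supp m n X"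
  have "?P (card ((\<lambda>p. {p}) ` supp m n X))"
  proof (intro exI conjI)
    show "finite ((\<lambda>p. {p}) ` supp m n X)" using supp_finite by auto
    show "\<forall>R\<in>(\<lambda>p. {p}) ` supp m n X. is_rectangle m n X R"
    proof
      fix R assume "R \<in> (\<lambda>p. {p}) ` supp m n X"
      then obtain p where "R = {p}" "p \<in> supp m n X" by blast
      hence "R = {fst p} \<times> {snd p}" "{fst p} \<times> {snd p} \<subseteq> supp m n X" by auto
      thus "is_rectangle m n X R" unfolding is_rectangle_def by blast
    qed
    show "\<Union>((\<lambda>p. {p}) ` supp m n X) = supp m n X" by blast
  qed (rule refl)
  hence "?P (boolean_rank m n X)" unfolding boolean_rank_def by (rule LeastI[of ?P])
  then obtain F where F: "finite F" "card F = boolean_rank m n X" "\<forall>R\<in>F. is_rectangle m n X R"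
    "\<Union>F = supp m n X" by blast
  obtain g where g: "bij_betw g {0..<card F} F" using ex_bij_betw_nat_finite[OF F(1)] by blast
  define c where "c = (\<lambda>v. LEAST i. i < card F \<and> v \<in> g i)"
  have cv: "c v < card F \<and> v \<in> g (c v)" if "v \<in> supp m n X" for v
  proof -
    have "v \<in> \<Union>F" using that F(4) by simp
    then obtain R where "R \<in> F" "v \<in> R" by blast
    hence "R \<in> g ` {0..<card F}" using g unfolding bij_betw_def by simp
    then obtain i where "i < card F" "g i = R" by auto
    hence "i < card F \<and> v \<in> g i" using \<open>v \<in> R\<close> by simp
    from LeastI[of "\<lambda>i. i < card F \<and> v \<in> g i", OF this] show ?thesis unfolding c_def .
  qed
  have "colouring (supp m n X) ?F c (card F)" unfolding colouring_def
  proof (intro conjI ballI impI)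
    fix v assume "v \<in> supp m n X" thus "c v < card F" using cv by blast
  next
    fix u v assume uv: "u \<in> supp m n X" "v \<in> supp m n X" "u \<noteq> v" "\<not> rc_adj m n X u v"
    show "c u \<noteq> c v"
    proof
      assume e: "c u = c v"
      have "c u \<in> {0..<card F}" using cv[OF uv(1)] by simp
      hence "g (c u) \<in> F" using g unfolding bij_betw_def by blast
      hence "is_rectangle m n X (g (c u))" using F(3) by blast
      moreover have "u \<in> g (c u)" using cv[OF uv(1)] by blast
      moreover have "v \<in> g (c u)" using cv[OF uv(2)] e by simp
      ultimately have "rc_adj m n X u v" unfolding rc_adj_def using uv by blast
      thus False using uv by simp
    qed
  qed
  hence "chromatic_number (supp m n X) ?F \<le> card F" by (rule chrom_le)
  thus "chromatic_number (supp m n X) ?F \<le> boolean_rank m n X" using F(2) by simp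
qed

lemma sub_corr:
  assumes I: "I \<subseteq> {..<m}" and J: "J \<subseteq> {..<n}"
  defines "\<phi> \<equiv> (\<lambda>p. (sorted_list_of_set I ! fst p, sorted_list_of_set J ! snd p))"
  shows "inj_on \<phi> (supp (card I) (card J) (submatrix X I J))"
    "\<phi> ` supp (card I) (card J) (submatrix X I J) = supp m n X \<inter> (I \<times> J)"
    "\<And>u v. u \<in> supp (card I) (card J) (submatrix X I J) \<Longrightarrow> v \<in> supp (card I) (card J) (submatrix X I J)
       \<Longrightarrow> rc_adj (card I) (card J) (submatrix X I J) u v = rc_adj m n X (\<phi> u) (\<phi> v)"
proof -
  have fI: "finite I" using I by (rule finite_subset) auto
  have fJ: "finite J" using J by (rule finite_subset) auto
  let ?sI = "sorted_list_of_set I" and ?sJ = "sorted_list_of_set J"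
  have lI: "length ?sI = card I" and lJ: "length ?sJ = card J" by simp_all
  have dI: "distinct ?sI" and dJ: "distinct ?sJ" by simp_all
  have setI: "set ?sI = I" using fI by simp
  have setJ: "set ?sJ = J" using fJ by simp
  have memI: "?sI ! a \<in> I" if "a < card I" for a using that lI setI by (metis nth_mem)
  have memJ: "?sJ ! b \<in> J" if "b < card J" for b using that lJ setJ by (metis nth_mem)
  let ?S = "supp (card I) (card J) (submatrix X I J)"
  show inj: "inj_on \<phi> ?S"
  proof
    fix u v assume uv: "u \<in> ?S" "v \<in> ?S" "\<phi> u = \<phi> v"
    hence "?sI ! fst u = ?sI ! fst v" "?sJ ! snd u = ?sJ ! snd v" unfolding \<phi>_def by auto
    moreover have "fst u < card I" "fst v < card I" "snd u < card J" "snd v < card J"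
      using uv(1,2) by (auto simp: supp_def)
    ultimately have "fst u = fst v" "snd u = snd v" using dI dJ lI lJ by (auto simp: nth_eq_iff_index_eq)
    thus "u = v" by (simp add: prod_eq_iff)
  qed
  show "\<phi> ` ?S = supp m n X \<inter> (I \<times> J)"
  proof
    show "\<phi> ` ?S \<subseteq> supp m n X \<inter> (I \<times> J)"
    proof
      fix x assume "x \<in> \<phi> ` ?S"
      then obtain a b where ab: "a < card I" "b < card J" "submatrix X I J a b" "x = \<phi> (a, b)"
        by (auto simp: supp_def)
      thus "x \<in> supp m n X \<inter> (I \<times> J)" using memI memJ I J
        by (auto simp: supp_def submatrix_def \<phi>_def)
    qed
    show "supp m n X \<inter> (I \<times> J) \<subseteq> \<phi> ` ?S"
    proof
      fix x assume x: "x \<in> supp m n X \<inter> (I \<times> J)"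
      obtain i j where ij: "x = (i, j)" by (cases x) auto
      have "i \<in> set ?sI" "j \<in> set ?sJ" using x ij setI setJ by auto
      then obtain a b where ab: "a < card I" "?sI ! a = i" "b < card J" "?sJ ! b = j"
        using lI lJ by (metis in_set_conv_nth)
      have "(a, b) \<in> ?S" using ab x ij by (auto simp: supp_def submatrix_def)
      moreover have "\<phi> (a, b) = x" using ab ij unfolding \<phi>_def by simp
      ultimately show "x \<in> \<phi> ` ?S" by force
    qed
  qed
  have inS: "\<phi> u \<in> supp m n X" if "u \<in> ?S" for u
    using that \<open>\<phi> ` ?S = supp m n X \<inter> (I \<times> J)\<close> by auto
  fix u v assume uv: "u \<in> ?S" "v \<in> ?S"
  have "u \<noteq> v \<longleftrightarrow> \<phi> u \<noteq> \<phi> v" using inj uv by (auto dest: inj_onD)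
  thus "rc_adj (card I) (card J) (submatrix X I J) u v = rc_adj m n X (\<phi> u) (\<phi> v)"
    using rc_adj_char[OF uv] rc_adj_char[OF inS[OF uv(1)] inS[OF uv(2)]]
    by (simp add: submatrix_def \<phi>_def)
qed

lemma firm_from:
  assumes "\<And>I J. I \<subseteq> {..<m} \<Longrightarrow> J \<subseteq> {..<n} \<Longrightarrow>
     chromatic_number (supp m n X \<inter> (I \<times> J)) (\<lambda>u v. \<not> rc_adj m n X u v)
     = clique_number (supp m n X \<inter> (I \<times> J)) (\<lambda>u v. \<not> rc_adj m n X u v)"
  shows "firm m n X"
  unfolding firm_def
proof (intro allI impI)
  fix I J assume I: "I \<subseteq> {..<m}" and J: "J \<subseteq> {..<n}"
  define \<phi> where "\<phi> = (\<lambda>p. (sorted_list_of_set I ! fst p, sorted_list_of_set J ! snd p))"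
  let ?S = "supp (card I) (card J) (submatrix X I J)"
  have sc1: "inj_on \<phi> ?S" using sub_corr(1)[OF I J, where X=X] unfolding \<phi>_def .
  have sc2: "\<phi> ` ?S = supp m n X \<inter> (I \<times> J)" using sub_corr(2)[OF I J, where X=X] unfolding \<phi>_def .
  have sc3: "rc_adj (card I) (card J) (submatrix X I J) u v = rc_adj m n X (\<phi> u) (\<phi> v)"
    if "u \<in> ?S" "v \<in> ?S" for u v using sub_corr(3)[OF I J that] unfolding \<phi>_def .
  have adj: "(\<not> rc_adj (card I) (card J) (submatrix X I J) u v) = (\<not> rc_adj m n X (\<phi> u) (\<phi> v))"
    if "u \<in> ?S" "v \<in> ?S" "u \<noteq> v" for u v using sc3[OF that(1,2)] by simp
  show "isol_num (card I) (card J) (submatrix X I J) = boolean_rank (card I) (card J) (submatrix X I J)"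
    unfolding isol_eq br_eq
    using iso_inv[of \<phi> ?S "\<lambda>u v. \<not> rc_adj (card I) (card J) (submatrix X I J) u v"
       "\<lambda>u v. \<not> rc_adj m n X u v", OF sc1 adj] sc2 assms[OF I J] by simp
qed

lemma add_simplicial:
  assumes fin: "finite W" and s: "s \<in> W" and sym: "\<And>u v. E u v = E v u"
    and cl: "\<And>u v. u \<in> W \<Longrightarrow> v \<in> W \<Longrightarrow> u \<noteq> s \<Longrightarrow> v \<noteq> s \<Longrightarrow> E s u \<Longrightarrow> E s v \<Longrightarrow> u \<noteq> v \<Longrightarrow> E u v"
    and IH: "chromatic_number {u\<in>W. u \<noteq> s \<and> \<not> E s u} (\<lambda>u v. \<not> E u v)
             = clique_number {u\<in>W. u \<noteq> s \<and> \<not> E s u} (\<lambda>u v. \<not> E u v)"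
  shows "chromatic_number W (\<lambda>u v. \<not> E u v) = clique_number W (\<lambda>u v. \<not> E u v)"
proof -
  let ?F = "\<lambda>u v. \<not> E u v"
  define U where "U = {u\<in>W. u \<noteq> s \<and> \<not> E s u}"
  have finU: "finite U" using fin unfolding U_def by auto
  obtain K where K: "K \<subseteq> U" "is_clique ?F K" "card K = clique_number U ?F"
    using clique_number_ex[OF finU] by blast
  have "is_clique ?F (insert s K)" unfolding is_clique_def
  proof (intro ballI impI)
    fix u v assume uv: "u \<in> insert s K" "v \<in> insert s K" "u \<noteq> v"
    show "\<not> E u v"
    proof (cases "u = s")
      case True thus ?thesis using uv K(1) unfolding U_def by auto
    next
      case False
      show ?thesis
      proof (cases "v = s")
        case True thus ?thesis using uv K(1) sym[of u v] unfolding U_def by auto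
      next
        case False thus ?thesis using uv K(2) \<open>u \<noteq> s\<close> unfolding is_clique_def by auto
      qed
    qed
  qed
  moreover have "insert s K \<subseteq> W" using K(1) s unfolding U_def by auto
  ultimately have "card (insert s K) \<le> clique_number W ?F" using fin by (intro clique_number_ge)
  moreover have "s \<notin> K" using K(1) unfolding U_def by auto
  ultimately have om: "Suc (clique_number U ?F) \<le> clique_number W ?F"
    using K finU by (simp add: finite_subset)
  obtain c0 where c0: "colouring U ?F c0 (clique_number U ?F)"
    using chrom_ex[OF finU, of ?F] IH unfolding U_def by auto
  define c where "c = (\<lambda>v. if v \<in> U then c0 v else clique_number U ?F)"
  have "colouring W ?F c (Suc (clique_number U ?F))" unfolding colouring_def
  proof (intro conjI ballI impI)
    fix v assume "v \<in> W" thus "c v < Suc (clique_number U ?F)"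
      using c0 unfolding c_def colouring_def by (auto simp: less_Suc_eq)
  next
    fix u v assume uv: "u \<in> W" "v \<in> W" "u \<noteq> v" "\<not> E u v"
    show "c u \<noteq> c v"
    proof (cases "u \<in> U \<and> v \<in> U")
      case True
      hence "c0 u \<noteq> c0 v" using c0 uv unfolding colouring_def by blast
      thus ?thesis using True unfolding c_def by simp
    next
      case False
      show ?thesis
      proof (cases "u \<in> U \<or> v \<in> U")
        case True
        thus ?thesis using False c0 unfolding c_def colouring_def
          by (metis less_irrefl)
      next
        case nU: False
        have "E u v"
        proof (cases "u = s")
          case True thus ?thesis using nU uv unfolding U_def by auto
        next
          case us: False
          show ?thesis
          proof (cases "v = s")
            case True thus ?thesis using nU uv sym[of u v] unfolding U_def by auto
          next
            case False thus ?thesis using nU uv us cl unfolding U_def by auto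
          qed
        qed
        thus ?thesis using uv by simp
      qed
    qed
  qed
  hence "chromatic_number W ?F \<le> Suc (clique_number U ?F)" by (rule chrom_le)
  thus ?thesis using om omega_le_chi[OF fin, of ?F] by simp
qed

lemma pick_colour:
  assumes "finite A" "card A < (w::nat)"
  shows "\<exists>x. x < w \<and> x \<notin> A"
proof (rule ccontr)
  assume "\<not> ?thesis"
  hence "{..<w} \<subseteq> A" by auto
  hence "card {..<w} \<le> card A" using assms(1) by (rule card_mono[rotated])
  thus False using assms(2) by simp
qed

lemma clique_bound:
  assumes fin: "finite W" and s: "s \<in> W" and N: "N \<subseteq> W" "s \<notin> N"
    and cl: "\<And>u v. u \<in> insert s N \<Longrightarrow> v \<in> insert s N \<Longrightarrow> u \<noteq> v \<Longrightarrow> E u v"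
  shows "card N < clique_number W E"
proof -
  have "is_clique E (insert s N)" using cl unfolding is_clique_def by blast
  hence "card (insert s N) \<le> clique_number W E" using fin s N by (intro clique_number_ge) auto
  thus ?thesis using N finite_subset[OF N(1) fin] by simp
qed

lemma colour_ext:
  fixes E :: "'v \<Rightarrow> 'v \<Rightarrow> bool"
  assumes fin: "finite W" and sym: "\<And>u v. E u v = E v u"
    and dist: "a \<noteq> b" "a \<noteq> c" "b \<noteq> c" "d \<noteq> a" "d \<noteq> b" "d \<noteq> c"
    and W0def: "W0 = W - {a, b, c}"
    and perf0: "chromatic_number W0 E = clique_number W0 E"
    and Na: "\<And>u. u \<in> W0 \<Longrightarrow> E a u \<Longrightarrow> u \<in> P"
    and Nb: "\<And>u. u \<in> W0 \<Longrightarrow> E b u \<Longrightarrow> u \<in> Q"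
    and Nc: "\<And>u. u \<in> W0 \<Longrightarrow> E c u \<Longrightarrow> u = d"
    and PQ: "\<And>u v. u \<in> P \<union> Q \<Longrightarrow> v \<in> P \<union> Q \<Longrightarrow> u \<noteq> v \<Longrightarrow> E u v"
    and PQd: "P \<inter> Q \<subseteq> {d}" and dP: "d \<in> P" and dQ: "d \<in> Q"
    and Ea: "\<And>u. u \<in> P \<Longrightarrow> E a u" and Eb: "\<And>u. u \<in> Q \<Longrightarrow> E b u"
    and Eab: "E a b" and Eac: "E a c" and Ebc: "E b c" and Ecd: "E c d"
  shows "chromatic_number W E \<le> clique_number W E"
proof -
  define w where "w = clique_number W E"
  have W0W: "W0 \<subseteq> W" using W0def by auto
  have finW0: "finite W0" using fin W0W by (rule finite_subset[rotated])
  have w0: "clique_number W0 E \<le> w" unfolding w_def using fin W0W by (rule clique_mono)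
  obtain c0 where c0': "colouring W0 E c0 (clique_number W0 E)"
    using chrom_ex[OF finW0, of E] perf0 by auto
  have c0lt: "c0 v < w" if "v \<in> W0" for v using c0' that w0 unfolding colouring_def by fastforce
  have c0ne: "c0 u \<noteq> c0 v" if "u \<in> W0" "v \<in> W0" "u \<noteq> v" "E u v" for u v
    using c0' that unfolding colouring_def by blast
  define Na' where "Na' = {u\<in>W0. E a u}"
  define Nb' where "Nb' = {u\<in>W0. E b u}"
  have finNa: "finite Na'" "finite Nb'" using finW0 unfolding Na'_def Nb'_def by auto
  have NaP: "Na' \<subseteq> P" using Na unfolding Na'_def by auto
  have NbQ: "Nb' \<subseteq> Q" using Nb unfolding Nb'_def by auto
  have aW0: "a \<notin> W0" "b \<notin> W0" "c \<notin> W0" using W0def by auto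
  have abcd: "E u v" if "u \<in> {a,b,c,d}" "v \<in> {a,b,c,d}" "u \<noteq> v" for u v
  proof -
    have f: "E a b" "E a c" "E b c" "E c d" "E a d" "E b d" using Eab Eac Ebc Ecd Ea[OF dP] Eb[OF dQ] by auto
    have g: "E b a" "E c a" "E c b" "E d c" "E d a" "E d b" using f sym by metis+
    show ?thesis using that f g by auto
  qed
  have bndA: "card Na' < w" if "a \<in> W"
    unfolding w_def
  proof (rule clique_bound[OF fin that])
    show "Na' \<subseteq> W" "a \<notin> Na'" using W0W aW0 unfolding Na'_def by auto
    fix u v assume uv: "u \<in> insert a Na'" "v \<in> insert a Na'" "u \<noteq> v"
    hence "(u = a \<and> v \<in> Na') \<or> (v = a \<and> u \<in> Na') \<or> (u \<in> Na' \<and> v \<in> Na')" by auto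
    thus "E u v"
    proof (elim disjE conjE)
      assume "u = a" "v \<in> Na'" thus ?thesis unfolding Na'_def by auto
    next
      assume "v = a" "u \<in> Na'" thus ?thesis using sym[of u v] unfolding Na'_def by auto
    next
      assume "u \<in> Na'" "v \<in> Na'" thus ?thesis using NaP PQ uv(3) by blast
    qed
  qed
  have bndB: "card Nb' < w" if "b \<in> W"
    unfolding w_def
  proof (rule clique_bound[OF fin that])
    show "Nb' \<subseteq> W" "b \<notin> Nb'" using W0W aW0 unfolding Nb'_def by auto
    fix u v assume uv: "u \<in> insert b Nb'" "v \<in> insert b Nb'" "u \<noteq> v"
    hence "(u = b \<and> v \<in> Nb') \<or> (v = b \<and> u \<in> Nb') \<or> (u \<in> Nb' \<and> v \<in> Nb')" by auto
    thus "E u v"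
    proof (elim disjE conjE)
      assume "u = b" "v \<in> Nb'" thus ?thesis unfolding Nb'_def by auto
    next
      assume "v = b" "u \<in> Nb'" thus ?thesis using sym[of u v] unfolding Nb'_def by auto
    next
      assume "u \<in> Nb'" "v \<in> Nb'" thus ?thesis using NbQ PQ uv(3) by blast
    qed
  qed
  have cimA: "card (c0 ` Na') \<le> card Na'" "card (c0 ` Nb') \<le> card Nb'"
    using finNa by (auto intro: card_image_le)
  obtain ca where ca: "a \<in> W \<Longrightarrow> ca < w \<and> ca \<notin> c0 ` Na' \<and> (c0 ` Nb' \<subseteq> c0 ` Na' \<or> ca \<in> c0 ` Nb')"
  proof (cases "a \<in> W")
    case True
    show ?thesis
    proof (cases "c0 ` Nb' \<subseteq> c0 ` Na'")
      case True
      obtain x where "x < w" "x \<notin> c0 ` Na'"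
        using pick_colour[of "c0 ` Na'" w] finNa cimA bndA[OF \<open>a \<in> W\<close>] by auto
      thus ?thesis using that True by blast
    next
      case False
      then obtain x where x: "x \<in> c0 ` Nb'" "x \<notin> c0 ` Na'" by blast
      hence "x < w" using c0lt unfolding Nb'_def by auto
      thus ?thesis using that x by blast
    qed
  next
    case False thus ?thesis using that by blast
  qed
  obtain cb where cb: "b \<in> W \<Longrightarrow> cb < w \<and> cb \<notin> c0 ` Nb' \<and> (a \<in> W \<longrightarrow> cb \<noteq> ca)"
  proof (cases "b \<in> W")
    case bW: True
    define Fb where "Fb = c0 ` Nb' \<union> (if a \<in> W then {ca} else {})"
    have finFb: "finite Fb" unfolding Fb_def using finNa by auto
    have "card Fb < w"
    proof (cases "a \<in> W")
      case False
      thus ?thesis unfolding Fb_def using cimA bndB[OF bW] by simp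
    next
      case aW: True
      show ?thesis
      proof (cases "ca \<in> c0 ` Nb'")
        case True
        hence "Fb = c0 ` Nb'" unfolding Fb_def using aW by auto
        thus ?thesis using cimA bndB[OF bW] by simp
      next
        case False
        hence sub: "c0 ` Nb' \<subseteq> c0 ` Na'" using ca[OF aW] by blast
        have Nbd: "Nb' \<subseteq> {d}"
        proof
          fix u assume u: "u \<in> Nb'"
          then obtain v where v: "v \<in> Na'" "c0 v = c0 u" using sub by (metis image_eqI imageE subsetD)
          have "u = v"
          proof (rule ccontr)
            assume "u \<noteq> v"
            moreover have "E u v" using PQ NaP NbQ u v \<open>u \<noteq> v\<close> by blast
            moreover have "u \<in> W0" "v \<in> W0" using u v unfolding Na'_def Nb'_def by auto
            ultimately show False using c0ne v by metis
          qed
          hence "u \<in> P \<inter> Q" using u v NaP NbQ by auto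
          thus "u \<in> {d}" using PQd by auto
        qed
        have "card (insert a Nb') < w"
          unfolding w_def
        proof (rule clique_bound[OF fin bW])
          show "insert a Nb' \<subseteq> W" "b \<notin> insert a Nb'" using aW W0W aW0 dist unfolding Nb'_def by auto
          fix u v assume "u \<in> insert b (insert a Nb')" "v \<in> insert b (insert a Nb')" "u \<noteq> v"
          hence "u \<in> {a,b,c,d}" "v \<in> {a,b,c,d}" using Nbd by auto
          thus "E u v" using abcd \<open>u \<noteq> v\<close> by blast
        qed
        moreover have "card (insert a Nb') = Suc (card Nb')" using finNa aW0 unfolding Nb'_def by auto
        moreover have "card Fb \<le> Suc (card (c0 ` Nb'))" unfolding Fb_def using aW finNa
          by (simp add: card_insert_le_m1)
        ultimately show ?thesis using cimA by simp
      qed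
    qed
    then obtain x where x: "x < w" "x \<notin> Fb" using pick_colour finFb by blast
    hence "x \<notin> c0 ` Nb'" "a \<in> W \<longrightarrow> x \<noteq> ca" unfolding Fb_def by auto
    thus ?thesis using that x(1) by blast
  next
    case False thus ?thesis using that by blast
  qed
  define col0 where "col0 = (\<lambda>v. if v = a then ca else if v = b then cb else c0 v)"
  define Nc' where "Nc' = {u\<in>W. u \<noteq> c \<and> E c u}"
  have Nc'sub: "Nc' \<subseteq> {a, b, d}" using Nc W0def unfolding Nc'_def by auto
  have finNc: "finite Nc'" using fin unfolding Nc'_def by auto
  obtain cc where cc: "c \<in> W \<Longrightarrow> cc < w \<and> cc \<notin> col0 ` Nc'"
  proof (cases "c \<in> W")
    case True
    have "card Nc' < w" unfolding w_def
    proof (rule clique_bound[OF fin True])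
      show "Nc' \<subseteq> W" "c \<notin> Nc'" unfolding Nc'_def by auto
      fix u v assume "u \<in> insert c Nc'" "v \<in> insert c Nc'" "u \<noteq> v"
      hence "u \<in> {a,b,c,d}" "v \<in> {a,b,c,d}" using Nc'sub by auto
      thus "E u v" using abcd \<open>u \<noteq> v\<close> by blast
    qed
    moreover have "card (col0 ` Nc') \<le> card Nc'" using finNc by (rule card_image_le)
    ultimately obtain x where "x < w" "x \<notin> col0 ` Nc'" using pick_colour[of "col0 ` Nc'" w] finNc by auto
    thus ?thesis using that by blast
  next
    case False thus ?thesis using that by blast
  qed
  define col where "col = (\<lambda>v. if v = c then cc else col0 v)"
  have key: "col u \<noteq> col v" if uv: "u \<in> W" "v \<in> W" "u \<noteq> v" "E u v"
    and cs: "u = c \<or> (u = a \<and> v \<noteq> c) \<or> (u = b \<and> v \<noteq> a \<and> v \<noteq> c) \<or> (u \<in> W0 \<and> v \<in> W0)" for u v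
  proof -
    consider "u = c" | "u = a" "v \<noteq> c" | "u = b" "v \<noteq> a" "v \<noteq> c" | "u \<in> W0" "v \<in> W0"
      using cs by blast
    thus ?thesis
    proof cases
      case 1
      hence "v \<in> Nc'" using uv unfolding Nc'_def by auto
      hence "cc \<noteq> col0 v" using cc uv 1 by auto
      thus ?thesis using 1 uv unfolding col_def by auto
    next
      case 2
      show ?thesis
      proof (cases "v = b")
        case True thus ?thesis using 2 cb uv dist unfolding col_def col0_def by auto
      next
        case False
        hence "v \<in> W0" using 2 uv W0def by auto
        hence "v \<in> Na'" using 2 uv unfolding Na'_def by auto
        hence "ca \<noteq> c0 v" using ca uv 2 by auto
        thus ?thesis using 2 \<open>v \<in> W0\<close> aW0 dist unfolding col_def col0_def by auto
      qed
    next
      case 3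
      hence "v \<in> W0" using uv W0def by auto
      hence "v \<in> Nb'" using 3 uv unfolding Nb'_def by auto
      hence "cb \<noteq> c0 v" using cb uv 3 by auto
      thus ?thesis using 3 \<open>v \<in> W0\<close> aW0 dist unfolding col_def col0_def by auto
    next
      case 4
      thus ?thesis using c0ne uv aW0 unfolding col_def col0_def by (metis)
    qed
  qed
  have "colouring W E col w" unfolding colouring_def
  proof (intro conjI ballI impI)
    fix v assume v: "v \<in> W"
    show "col v < w"
    proof (cases "v \<in> W0")
      case True thus ?thesis using c0lt aW0 unfolding col_def col0_def by (metis)
    next
      case False
      hence "v = a \<or> v = b \<or> v = c" using v W0def by auto
      thus ?thesis using ca cb cc v dist unfolding col_def col0_def by auto
    qed
  next
    fix u v assume uv: "u \<in> W" "v \<in> W" "u \<noteq> v" "E u v"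
    have "(u = c \<or> (u = a \<and> v \<noteq> c) \<or> (u = b \<and> v \<noteq> a \<and> v \<noteq> c) \<or> (u \<in> W0 \<and> v \<in> W0)) \<or>
          (v = c \<or> (v = a \<and> u \<noteq> c) \<or> (v = b \<and> u \<noteq> a \<and> u \<noteq> c) \<or> (v \<in> W0 \<and> u \<in> W0))"
      using uv W0def by auto
    thus "col u \<noteq> col v"
    proof
      assume "u = c \<or> (u = a \<and> v \<noteq> c) \<or> (u = b \<and> v \<noteq> a \<and> v \<noteq> c) \<or> (u \<in> W0 \<and> v \<in> W0)"
      thus ?thesis using key uv by blast
    next
      assume h: "v = c \<or> (v = a \<and> u \<noteq> c) \<or> (v = b \<and> u \<noteq> a \<and> u \<noteq> c) \<or> (v \<in> W0 \<and> u \<in> W0)"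
      have "E v u" using uv sym by auto
      thus ?thesis using key[OF uv(2,1) _ _ h] uv by auto
    qed
  qed
  hence "chromatic_number W E \<le> w" by (rule chrom_le)
  thus ?thesis unfolding w_def .
qed

theorem lemma2:
  fixes m n l k :: nat and X :: bmat
  assumes "superfirm m n X"
    and "(l, k) \<in> supp m n X"
  shows "firm (Suc m) (Suc n) (stretch m n X l k) \<and>
    (simplicial_one m n X l k \<longrightarrow> superfirm (Suc m) (Suc n) (stretch m n X l k))"
proof -
  define Y where "Y = stretch m n X l k"
  define a where "a = (l, n)"
  define b where "b = (m, k)"
  define c where "c = (m, n)"
  define d where "d = (l, k)"
  let ?SX = "supp m n X" and ?SY = "supp (Suc m) (Suc n) Y"
  let ?EY = "rc_adj (Suc m) (Suc n) Y" and ?EX = "rc_adj m n X"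
  have lm: "l < m" "k < n" "X l k" using assms(2) by (auto simp: supp_def)
  have Yeq: "Y i j = (if i < m \<and> j < n then X i j else (i, j) = (l, n) \<or> (i, j) = (m, k) \<or> (i, j) = (m, n))"
    for i j unfolding Y_def stretch_def by simp
  have Yold: "i < m \<Longrightarrow> j < n \<Longrightarrow> Y i j = X i j" for i j using Yeq by simp
  have Ynew: "Y l n" "Y m k" "Y m n" "Y l k" using Yeq lm by auto
  have Yrow: "Y m j \<Longrightarrow> j = k \<or> j = n" for j using Yeq lm by auto
  have Ycol: "Y i n \<Longrightarrow> i = l \<or> i = m" for i using Yeq lm by auto
  have dist: "a \<noteq> b" "a \<noteq> c" "b \<noteq> c" "d \<noteq> a" "d \<noteq> b" "d \<noteq> c"
    using lm unfolding a_def b_def c_def d_def by auto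
  have suppY: "?SY = ?SX \<union> {a, b, c}"
  proof
    show "?SY \<subseteq> ?SX \<union> {a, b, c}"
    proof
      fix p assume "p \<in> ?SY"
      then obtain i j where p: "p = (i, j)" "i < Suc m" "j < Suc n" "Y i j" by (auto simp: supp_def)
      show "p \<in> ?SX \<union> {a, b, c}"
      proof (cases "i < m \<and> j < n")
        case True thus ?thesis using p Yold by (auto simp: supp_def)
      next
        case False thus ?thesis using p Yeq unfolding a_def b_def c_def by auto
      qed
    qed
    show "?SX \<union> {a, b, c} \<subseteq> ?SY"
      using Yold Ynew lm unfolding a_def b_def c_def by (auto simp: supp_def)
  qed
  have XY: "?SX \<subseteq> ?SY" using suppY by auto
  have dX: "d \<in> ?SX" using assms(2) unfolding d_def .
  have abcY: "a \<in> ?SY" "b \<in> ?SY" "c \<in> ?SY" using suppY by auto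
  have notX: "a \<notin> ?SX" "b \<notin> ?SX" "c \<notin> ?SX" unfolding a_def b_def c_def by (auto simp: supp_def)
  have charY: "?EY p q \<longleftrightarrow> p \<noteq> q \<and> Y (fst p) (snd q) \<and> Y (fst q) (snd p)"
    if "p \<in> ?SY" "q \<in> ?SY" for p q using rc_adj_char[OF that] .
  have adjXY: "?EY p q = ?EX p q" if "p \<in> ?SX" "q \<in> ?SX" for p q
  proof -
    have "fst p < m" "snd p < n" "fst q < m" "snd q < n" using that by (auto simp: supp_def)
    thus ?thesis using charY[OF subsetD[OF XY that(1)] subsetD[OF XY that(2)]] rc_adj_char[OF that] Yold
      by simp
  qed
  have symY: "\<And>u v. ?EY u v = ?EY v u" by (rule rc_sym)
  have perfX: "perfect_graph ?SX ?EX" using assms(1) unfolding superfirm_def .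
  have LX: "chromatic_number W (\<lambda>u v. \<not> ?EY u v) = clique_number W (\<lambda>u v. \<not> ?EY u v)"
    if WX: "W \<subseteq> ?SX" for W
  proof -
    have "chromatic_number W (\<lambda>u v. \<not> ?EX u v) = clique_number W (\<lambda>u v. \<not> ?EX u v)"
      using lovasz[OF supp_finite perfX rc_sym, of "\<lambda>u v. \<not> ?EX u v"] WX by simp
    moreover have "(\<not> ?EY u v) = (\<not> ?EX u v)" if "u \<in> W" "v \<in> W" "u \<noteq> v" for u v
    proof -
      have "u \<in> ?SX" "v \<in> ?SX" using that WX by auto
      thus ?thesis using adjXY by simp
    qed
    ultimately show ?thesis using cong_inv[of W "\<lambda>u v. \<not> ?EY u v" "\<lambda>u v. \<not> ?EX u v"] by simp
  qed
  have PX: "chromatic_number W ?EY = clique_number W ?EY" if WX: "W \<subseteq> ?SX" for W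
  proof -
    have "chromatic_number W ?EX = clique_number W ?EX" using perfect_sub[OF perfX WX] .
    moreover have "?EY u v = ?EX u v" if "u \<in> W" "v \<in> W" "u \<noteq> v" for u v
    proof -
      have "u \<in> ?SX" "v \<in> ?SX" using that WX by auto
      thus ?thesis using adjXY by simp
    qed
    ultimately show ?thesis using cong_inv[of W ?EY ?EX] by simp
  qed
  have abcdY: "?EY u v" if "u \<in> {a,b,c,d}" "v \<in> {a,b,c,d}" "u \<noteq> v" for u v
  proof -
    have uv: "u \<in> ?SY" "v \<in> ?SY" using that abcY XY dX by auto
    have "fst u \<in> {l, m}" "snd u \<in> {k, n}" "fst v \<in> {l, m}" "snd v \<in> {k, n}"
      using that unfolding a_def b_def c_def d_def by auto
    hence "Y (fst u) (snd v)" "Y (fst v) (snd u)" using Ynew by auto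
    thus ?thesis using charY[OF uv] that(3) by simp
  qed
  have nbrc: "u \<in> {a, b, d}" if "u \<in> ?SY" "?EY c u" for u
  proof -
    have "Y m (snd u)" "Y (fst u) n" using charY[OF abcY(3) that(1)] that(2) unfolding c_def by auto
    hence "snd u = k \<or> snd u = n" "fst u = l \<or> fst u = m" using Yrow Ycol by auto
    moreover have "u \<noteq> c" using that charY[OF abcY(3) that(1)] by auto
    ultimately show ?thesis unfolding a_def b_def d_def c_def by (cases u) auto
  qed
  have finY: "finite ?SY" by (rule supp_finite)
  have firmY: "firm (Suc m) (Suc n) Y"
  proof (rule firm_from)
    fix I J assume I: "I \<subseteq> {..<Suc m}" and J: "J \<subseteq> {..<Suc n}"
    define W where "W = ?SY \<inter> (I \<times> J)"
    have finW: "finite W" unfolding W_def using finY by auto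
    have WY: "W \<subseteq> ?SY" unfolding W_def by auto
    have "chromatic_number W (\<lambda>u v. \<not> ?EY u v) = clique_number W (\<lambda>u v. \<not> ?EY u v)"
    proof (cases "c \<in> W")
      case cW: True
      show ?thesis
      proof (rule add_simplicial[OF finW cW symY])
        fix u v assume uv: "u \<in> W" "v \<in> W" "u \<noteq> c" "v \<noteq> c" "?EY c u" "?EY c v" "u \<noteq> v"
        have "u \<in> {a,b,c,d}" "v \<in> {a,b,c,d}" using nbrc uv WY by blast+
        thus "?EY u v" using abcdY uv(7) by blast
      next
        have "{u \<in> W. u \<noteq> c \<and> \<not> ?EY c u} \<subseteq> ?SX"
        proof
          fix u assume u: "u \<in> {u \<in> W. u \<noteq> c \<and> \<not> ?EY c u}"
          have "?EY c a" "?EY c b" using abcdY dist by auto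
          hence "u \<noteq> a" "u \<noteq> b" using u by auto
          thus "u \<in> ?SX" using u WY suppY by auto
        qed
        thus "chromatic_number {u \<in> W. u \<noteq> c \<and> \<not> ?EY c u} (\<lambda>u v. \<not> ?EY u v) =
              clique_number {u \<in> W. u \<noteq> c \<and> \<not> ?EY c u} (\<lambda>u v. \<not> ?EY u v)" by (rule LX)
      qed
    next
      case cW: False
      show ?thesis
      proof (cases "a \<in> W")
        case aW: True
        have bW: "b \<notin> W"
        proof
          assume "b \<in> W"
          hence "c \<in> W" using aW abcY unfolding W_def a_def b_def c_def by auto
          thus False using cW by simp
        qed
        have nbra: "fst u = l" if "u \<in> W" "?EY a u" for u
        proof -
          have uY: "u \<in> ?SY" using that WY by auto
          have "Y (fst u) n" using charY[OF abcY(1) uY] that unfolding a_def by auto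
          hence "fst u = l \<or> fst u = m" using Ycol by auto
          moreover have "fst u \<noteq> m"
          proof
            assume "fst u = m"
            moreover have "u \<in> ?SY" using that WY by auto
            ultimately have "Y m (snd u)" by (auto simp: supp_def)
            hence "snd u = k \<or> snd u = n" using Yrow by auto
            hence "u = b \<or> u = c" using \<open>fst u = m\<close> unfolding b_def c_def by (cases u) auto
            thus False using that bW cW by auto
          qed
          ultimately show ?thesis by simp
        qed
        show ?thesis
        proof (rule add_simplicial[OF finW aW symY])
          fix u v assume uv: "u \<in> W" "v \<in> W" "u \<noteq> a" "v \<noteq> a" "?EY a u" "?EY a v" "u \<noteq> v"
          have "fst u = l" "fst v = l" using nbra uv by auto
          moreover have uvY: "u \<in> ?SY" "v \<in> ?SY" using uv WY by auto
          moreover have "Y (fst u) (snd u)" "Y (fst v) (snd v)" using uvY by (auto simp: supp_def)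
          ultimately show "?EY u v" using charY[OF uvY] uv(7) by simp
        next
          have "{u \<in> W. u \<noteq> a \<and> \<not> ?EY a u} \<subseteq> ?SX" using WY suppY bW cW by auto
          thus "chromatic_number {u \<in> W. u \<noteq> a \<and> \<not> ?EY a u} (\<lambda>u v. \<not> ?EY u v) =
              clique_number {u \<in> W. u \<noteq> a \<and> \<not> ?EY a u} (\<lambda>u v. \<not> ?EY u v)" by (rule LX)
        qed
      next
        case aW: False
        show ?thesis
        proof (cases "b \<in> W")
          case bW: True
          have nbrb: "snd u = k" if "u \<in> W" "?EY b u" for u
          proof -
            have uY: "u \<in> ?SY" using that WY by auto
            have "Y m (snd u)" using charY[OF abcY(2) uY] that unfolding b_def by auto
            hence "snd u = k \<or> snd u = n" using Yrow by auto
            moreover have "snd u \<noteq> n"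
            proof
              assume "snd u = n"
              moreover have "u \<in> ?SY" using that WY by auto
              ultimately have "Y (fst u) n" by (auto simp: supp_def)
              hence "fst u = l \<or> fst u = m" using Ycol by auto
              hence "u = a \<or> u = c" using \<open>snd u = n\<close> unfolding a_def c_def by (cases u) auto
              thus False using that aW cW by auto
            qed
            ultimately show ?thesis by simp
          qed
          show ?thesis
          proof (rule add_simplicial[OF finW bW symY])
            fix u v assume uv: "u \<in> W" "v \<in> W" "u \<noteq> b" "v \<noteq> b" "?EY b u" "?EY b v" "u \<noteq> v"
            have "snd u = k" "snd v = k" using nbrb uv by auto
            moreover have uvY: "u \<in> ?SY" "v \<in> ?SY" using uv WY by auto
            moreover have "Y (fst u) (snd u)" "Y (fst v) (snd v)" using uvY by (auto simp: supp_def)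
            ultimately show "?EY u v" using charY[OF uvY] uv(7) by simp
          next
            have "{u \<in> W. u \<noteq> b \<and> \<not> ?EY b u} \<subseteq> ?SX" using WY suppY aW cW by auto
            thus "chromatic_number {u \<in> W. u \<noteq> b \<and> \<not> ?EY b u} (\<lambda>u v. \<not> ?EY u v) =
                clique_number {u \<in> W. u \<noteq> b \<and> \<not> ?EY b u} (\<lambda>u v. \<not> ?EY u v)" by (rule LX)
          qed
        next
          case bW: False
          have "W \<subseteq> ?SX" using WY suppY aW bW cW by auto
          thus ?thesis by (rule LX)
        qed
      qed
    qed
    thus "chromatic_number (?SY \<inter> (I \<times> J)) (\<lambda>u v. \<not> ?EY u v) =
          clique_number (?SY \<inter> (I \<times> J)) (\<lambda>u v. \<not> ?EY u v)" unfolding W_def .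
  qed
  have superY: "superfirm (Suc m) (Suc n) Y" if simp1: "simplicial_one m n X l k"
  proof -
    have simpl: "X i j" if "i < m" "X i k" "j < n" "X l j" for i j
      using simp1 that unfolding simplicial_one_def supp_def by blast
    define P where "P = {p \<in> ?SX. fst p = l}"
    define Q where "Q = {p \<in> ?SX. snd p = k}"
    have PQY: "Y (fst u) (snd v)" if "u \<in> P \<union> Q" "v \<in> P \<union> Q" for u v
    proof -
      have b: "fst u < m" "snd v < n" "X (fst u) (snd u)" "X (fst v) (snd v)"
        using that unfolding P_def Q_def by (auto simp: supp_def)
      have "X (fst u) (snd v)"
      proof (cases "u \<in> P")
        case True
        thus ?thesis using that b lm unfolding P_def Q_def by auto
      next
        case False
        hence uQ: "snd u = k" using that unfolding Q_def by auto
        show ?thesis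
        proof (cases "v \<in> P")
          case True thus ?thesis using simpl b uQ unfolding P_def by auto
        next
          case False thus ?thesis using that b uQ unfolding Q_def by auto
        qed
      qed
      thus ?thesis using Yold b by simp
    qed
    have "perfect_graph ?SY ?EY" unfolding perfect_graph_def
    proof (intro allI impI antisym)
      fix W assume WY: "W \<subseteq> ?SY"
      have finW: "finite W" using finY WY by (rule finite_subset[rotated])
      show "clique_number W ?EY \<le> chromatic_number W ?EY" by (rule omega_le_chi[OF finW])
      show "chromatic_number W ?EY \<le> clique_number W ?EY"
      proof (rule colour_ext[OF finW symY dist refl, where P = P and Q = Q])
        show "chromatic_number (W - {a, b, c}) ?EY = clique_number (W - {a, b, c}) ?EY"
          using WY suppY by (intro PX) auto
      next
        fix u assume u: "u \<in> W - {a, b, c}" "?EY a u"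
        hence uX: "u \<in> ?SX" using WY suppY by auto
        have uY: "u \<in> ?SY" using u WY by auto
        have "Y (fst u) n" using charY[OF abcY(1) uY] u unfolding a_def by auto
        hence "fst u = l \<or> fst u = m" using Ycol by auto
        thus "u \<in> P" using uX unfolding P_def by (auto simp: supp_def)
      next
        fix u assume u: "u \<in> W - {a, b, c}" "?EY b u"
        hence uX: "u \<in> ?SX" using WY suppY by auto
        have uY: "u \<in> ?SY" using u WY by auto
        have "Y m (snd u)" using charY[OF abcY(2) uY] u unfolding b_def by auto
        hence "snd u = k \<or> snd u = n" using Yrow by auto
        thus "u \<in> Q" using uX unfolding Q_def by (auto simp: supp_def)
      next
        fix u assume u: "u \<in> W - {a, b, c}" "?EY c u"
        thus "u = d" using nbrc WY by blast
      next
        fix u v assume uv: "u \<in> P \<union> Q" "v \<in> P \<union> Q" "u \<noteq> v"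
        have uvY: "u \<in> ?SY" "v \<in> ?SY" using uv XY unfolding P_def Q_def by auto
        show "?EY u v" using charY[OF uvY] uv PQY by auto
      next
        show "P \<inter> Q \<subseteq> {d}" unfolding P_def Q_def d_def by auto
        show "d \<in> P" "d \<in> Q" using dX unfolding P_def Q_def d_def by auto
      next
        fix u assume u: "u \<in> P"
        have uY: "u \<in> ?SY" using u XY unfolding P_def by auto
        have "snd u < n" "X l (snd u)" using u unfolding P_def by (auto simp: supp_def)
        moreover have "u \<noteq> a" using \<open>snd u < n\<close> unfolding a_def by auto
        ultimately show "?EY a u" using charY[OF abcY(1) uY] Yold lm Ynew u unfolding a_def P_def by auto
      next
        fix u assume u: "u \<in> Q"
        have uY: "u \<in> ?SY" using u XY unfolding Q_def by auto
        have "fst u < m" "X (fst u) k" using u unfolding Q_def by (auto simp: supp_def)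
        moreover have "u \<noteq> b" using \<open>fst u < m\<close> unfolding b_def by auto
        ultimately show "?EY b u" using charY[OF abcY(2) uY] Yold lm Ynew u unfolding b_def Q_def by auto
      next
        show "?EY a b" "?EY a c" "?EY b c" "?EY c d" using abcdY dist by auto
      qed
    qed
    thus ?thesis unfolding superfirm_def .
  qed
  show ?thesis using firmY superY unfolding Y_def by blast
qed

end
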